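(* Let $\mathcal M=(S,A,P)$ be an MDP, $T\subseteq S$ a set of sink target states, $s_0\in S$ with $\mathrm{Val}(s_0)>0$, and $\mathcal M'$ the pruned MDP. Let $\sigma^*$ be a strategy of $\mathcal M'$ minimizing $\mathbb E'_{\sigma,s_0}(\mathrm{len}_T)$ over all strategies $\sigma$ of $\mathcal M'$. Then (1) $\Pr_{\sigma^*,s_0}(\Diamond T)=\mathrm{Val}(s_0)$, and (2) $\mathbb E_{\sigma^*,s_0}(\mathrm{len}_T\mid\Diamond T)=\min_{\sigma\in\Sigma_{\mathcal M,s_0}(\Diamond T)}\mathbb E_{\sigma,s_0}(\mathrm{len}_T\mid\Diamond T)$.
   Context: An MDP is $\mathcal M=(S,A,P)$ with $S,A$ finite and $P$ a partial map $S\times A\to\mathrm{Dist}(S)$; $a$ is legal at $s$ if $P(s,a)$ is defined; $P(s,a,s')=P(s,a)(s')$. A strategy maps finite paths to distributions over legal actions at the last state (history-dependent, randomized). $\Pr_{\sigma,s}$, $\mathbb E_{\sigma,s}$ are the induced probability measure and expectation on infinite paths from $s$. States of $T$ are sinks (single legal action, self-loop with probability 1); $\Diamond T$ is the event of visiting $T$; $\mathrm{Val}(s)=\max_\sigma\Pr_{\sigma,s}(\Diamond T)$; $\Sigma_{\mathcal M,s}(\Diamond T)$ is the set of strategies with $\Pr_{\sigma,s}(\Diamond T)=\mathrm{Val}(s)$. $\mathrm{len}_T(\rho)$ is the least $i$ with $\rho[i]\in T$ ($\infty$ if none). $\mathbb E_{\sigma,s}(\mathrm{len}_T\mid\Diamond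 T)=\sum_{r\ge0}r\cdot\Pr_{\sigma,s}(\Diamond T\wedge\mathrm{len}_T=r)/\Pr_{\sigma,s}(\Diamond T)$. $\mathrm{Opt}_{\mathcal M}=\{(s,a): a\text{ legal at }s,\ \mathrm{Val}(s)=\sum_{s'}P(s,a,s')\mathrm{Val}(s')\}$. The pruned MDP $\mathcal M'=(S',A,P')$ has $S'=\{s:\mathrm{Val}(s)>0\}$ and $P'(s,a,s')=P(s,a,s')\mathrm{Val}(s')/\mathrm{Val}(s)$ if $s\in S'$ and $(s,a)\in\mathrm{Opt}_{\mathcal M}$ (undefined otherwise). Strategies of $\mathcal M'$ are identified with strategies of $\mathcal M$ that after every finite path only play actions $a$ with $(\mathrm{last}(\rho),a)\in\mathrm{Opt}_{\mathcal M}$; $\mathbb E'_{\sigma,s}$ is the expectation in $\mathcal M'$. *)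

theory Defs
  imports "HOL-Probability.Probability"
begin

text \<open>An MDP over a finite state type 's and a finite action type 'a is a partial map
  P :: 's => 'a => 's pmf option.  Action a is legal at s iff P s a is not None.\<close>

type_synonym ('s, 'a) mdp = "'s \<Rightarrow> 'a \<Rightarrow> 's pmf option"

definition legal :: "('s, 'a) mdp \<Rightarrow> 's \<Rightarrow> 'a \<Rightarrow> bool" where
  "legal P s a \<longleftrightarrow> P s a \<noteq> None"

definition trans :: "('s, 'a) mdp \<Rightarrow> 's \<Rightarrow> 'a \<Rightarrow> 's \<Rightarrow> real" where
  "trans P s a s' = (case P s a of None \<Rightarrow> 0 | Some d \<Rightarrow> pmf d s')"

text \<open>Finite paths are nonempty lists of states [s_0, ..., s_n]; a (history-dependent,
  randomized) strategy maps every finite path to a distribution over actions legal at the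
  last state.\<close>
definition is_strategy :: "('s, 'a) mdp \<Rightarrow> ('s list \<Rightarrow> 'a pmf) \<Rightarrow> bool" where
  "is_strategy P \<sigma> \<longleftrightarrow> (\<forall>\<rho>. \<rho> \<noteq> [] \<longrightarrow> set_pmf (\<sigma> \<rho>) \<subseteq> {a. legal P (last \<rho>) a})"

text \<open>Probability of the cylinder of a finite path under strategy \<sigma>, for a transition
  function Q (used both for M and for the pruned M').\<close>
definition path_prob :: "('s \<Rightarrow> 'a::finite \<Rightarrow> 's \<Rightarrow> real) \<Rightarrow> ('s list \<Rightarrow> 'a pmf) \<Rightarrow> 's list \<Rightarrow> real" where
  "path_prob Q \<sigma> \<rho> =
     (\<Prod>i < length \<rho> - 1. (\<Sum>a\<in>UNIV. pmf (\<sigma> (take (Suc i) \<rho>)) a * Q (\<rho> ! i) a (\<rho> ! Suc i)))"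

text \<open>Pr_{\<sigma>,s}(len_T = r): the probability that the first visit to T happens at step r.\<close>
definition len_prob :: "('s::finite \<Rightarrow> 'a::finite \<Rightarrow> 's \<Rightarrow> real) \<Rightarrow> ('s list \<Rightarrow> 'a pmf) \<Rightarrow> 's set \<Rightarrow> 's \<Rightarrow> nat \<Rightarrow> real" where
  "len_prob Q \<sigma> T s r =
     (\<Sum>\<rho> \<in> {\<rho>. length \<rho> = Suc r \<and> \<rho> ! 0 = s \<and> \<rho> ! r \<in> T \<and> (\<forall>i<r. \<rho> ! i \<notin> T)}. path_prob Q \<sigma> \<rho>)"

text \<open>Pr_{\<sigma>,s}(\<Diamond>T), as the sum of the disjoint events len_T = r.\<close>
definition reach_prob :: "('s::finite \<Rightarrow> 'a::finite \<Rightarrow> 's \<Rightarrow> real) \<Rightarrow> ('s list \<Rightarrow> 'a pmf) \<Rightarrow> 's set \<Rightarrow> 's \<Rightarrow> real" where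
  "reach_prob Q \<sigma> T s = (\<Sum>r. len_prob Q \<sigma> T s r)"

text \<open>E_{\<sigma>,s}(len_T), where len_T = \<infinity> on paths never visiting T.\<close>
definition exp_len :: "('s::finite \<Rightarrow> 'a::finite \<Rightarrow> 's \<Rightarrow> real) \<Rightarrow> ('s list \<Rightarrow> 'a pmf) \<Rightarrow> 's set \<Rightarrow> 's \<Rightarrow> ennreal" where
  "exp_len Q \<sigma> T s = (\<Sum>r. ennreal (real r * len_prob Q \<sigma> T s r))
      + (if reach_prob Q \<sigma> T s < 1 then \<infinity> else 0)"

definition cond_exp_len :: "('s::finite \<Rightarrow> 'a::finite \<Rightarrow> 's \<Rightarrow> real) \<Rightarrow> ('s list \<Rightarrow> 'a pmf) \<Rightarrow> 's set \<Rightarrow> 's \<Rightarrow> ennreal" where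
  "cond_exp_len Q \<sigma> T s = (\<Sum>r. ennreal (real r * len_prob Q \<sigma> T s r)) / ennreal (reach_prob Q \<sigma> T s)"

definition Val :: "('s::finite, 'a::finite) mdp \<Rightarrow> 's set \<Rightarrow> 's \<Rightarrow> real" where
  "Val P T s = (SUP \<sigma> \<in> {\<sigma>. is_strategy P \<sigma>}. reach_prob (trans P) \<sigma> T s)"

definition opt_strategies :: "('s::finite, 'a::finite) mdp \<Rightarrow> 's set \<Rightarrow> 's \<Rightarrow> ('s list \<Rightarrow> 'a pmf) set" where
  "opt_strategies P T s = {\<sigma>. is_strategy P \<sigma> \<and> reach_prob (trans P) \<sigma> T s = Val P T s}"

definition Opt :: "('s::finite, 'a::finite) mdp \<Rightarrow> 's set \<Rightarrow> ('s \<times> 'a) set" where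
  "Opt P T = {(s, a). legal P s a \<and> Val P T s = (\<Sum>s'\<in>UNIV. trans P s a s' * Val P T s')}"

text \<open>Transition function of the pruned MDP M' (0 where P' is undefined).\<close>
definition pruned_trans :: "('s::finite, 'a::finite) mdp \<Rightarrow> 's set \<Rightarrow> 's \<Rightarrow> 'a \<Rightarrow> 's \<Rightarrow> real" where
  "pruned_trans P T s a s' =
     (if Val P T s > 0 \<and> (s, a) \<in> Opt P T then trans P s a s' * Val P T s' / Val P T s else 0)"

text \<open>Strategies of M' identified with strategies of M playing only Opt actions.\<close>
definition is_pruned_strategy :: "('s::finite, 'a::finite) mdp \<Rightarrow> 's set \<Rightarrow> ('s list \<Rightarrow> 'a pmf) \<Rightarrow> bool" where
  "is_pruned_strategy P T \<sigma> \<longleftrightarrow> is_strategy P \<sigma> \<and>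
     (\<forall>\<rho>. \<rho> \<noteq> [] \<longrightarrow> (\<forall>a\<in>set_pmf (\<sigma> \<rho>). (last \<rho>, a) \<in> Opt P T))"

definition sinks :: "('s, 'a) mdp \<Rightarrow> 's set \<Rightarrow> bool" where
  "sinks P T \<longleftrightarrow> (\<forall>t\<in>T. \<exists>a0. (\<forall>a. legal P t a \<longleftrightarrow> a = a0) \<and> P t a0 = Some (return_pmf t))"

end

theory Submission
  imports Defs
begin


definition w :: "('s \<Rightarrow> 'a::finite \<Rightarrow> 's \<Rightarrow> real) \<Rightarrow> ('s list \<Rightarrow> 'a pmf) \<Rightarrow> 's list \<Rightarrow> 's \<Rightarrow> real"
  where "w Q \<sigma> \<rho> x = (\<Sum>a\<in>UNIV. pmf (\<sigma> \<rho>) a * Q (last \<rho>) a x)"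

definition shift :: "('s list \<Rightarrow> 'a pmf) \<Rightarrow> 's \<Rightarrow> ('s list \<Rightarrow> 'a pmf)"
  where "shift \<sigma> s = (\<lambda>\<rho>. \<sigma> (s # \<rho>))"

lemma path_prob_single[simp]: "path_prob Q \<sigma> [s] = 1"
  by (simp add: path_prob_def)

lemma path_prob_Cons:
  "path_prob Q \<sigma> (s # x # \<pi>) = w Q \<sigma> [s] x * path_prob Q (shift \<sigma> s) (x # \<pi>)"
proof -
  have "path_prob Q \<sigma> (s # x # \<pi>) = (\<Prod>i < Suc (length \<pi>). (\<Sum>a\<in>UNIV. pmf (\<sigma> (take (Suc i) (s#x#\<pi>))) a * Q ((s#x#\<pi>) ! i) a ((s#x#\<pi>) ! Suc i)))"
    by (simp add: path_prob_def)
  also have "\<dots> = (\<Sum>a\<in>UNIV. pmf (\<sigma> [s]) a * Q s a x) * (\<Prod>i < length \<pi>. (\<Sum>a\<in>UNIV. pmf (\<sigma> (s # take (Suc i) (x#\<pi>))) a * Q ((x#\<pi>) ! i) a ((x#\<pi>) ! Suc i)))"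
    by (subst prod.lessThan_Suc_shift) simp
  also have "\<dots> = w Q \<sigma> [s] x * path_prob Q (shift \<sigma> s) (x # \<pi>)"
    by (simp add: path_prob_def w_def shift_def)
  finally show ?thesis .
qed

lemma path_prob_snoc:
  assumes "\<rho> \<noteq> []"
  shows "path_prob Q \<sigma> (\<rho> @ [x]) = path_prob Q \<sigma> \<rho> * w Q \<sigma> \<rho> x"
proof -
  obtain n where n: "length \<rho> = Suc n" using assms by (cases \<rho>) auto
  have "path_prob Q \<sigma> (\<rho> @ [x]) = (\<Prod>i < Suc n. (\<Sum>a\<in>UNIV. pmf (\<sigma> (take (Suc i) (\<rho>@[x]))) a * Q ((\<rho>@[x]) ! i) a ((\<rho>@[x]) ! Suc i)))"
    by (simp add: path_prob_def n)
  also have "\<dots> = (\<Prod>i < n. (\<Sum>a\<in>UNIV. pmf (\<sigma> (take (Suc i) (\<rho>@[x]))) a * Q ((\<rho>@[x]) ! i) a ((\<rho>@[x]) ! Suc i))) * (\<Sum>a\<in>UNIV. pmf (\<sigma> (take (Suc n) (\<rho>@[x]))) a * Q ((\<rho>@[x]) ! n) a ((\<rho>@[x]) ! Suc n))"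
    by simp
  also have "(\<Prod>i < n. (\<Sum>a\<in>UNIV. pmf (\<sigma> (take (Suc i) (\<rho>@[x]))) a * Q ((\<rho>@[x]) ! i) a ((\<rho>@[x]) ! Suc i))) = path_prob Q \<sigma> \<rho>"
    unfolding path_prob_def n by (intro prod.cong) (auto simp: nth_append n)
  also have "(\<Sum>a\<in>UNIV. pmf (\<sigma> (take (Suc n) (\<rho>@[x]))) a * Q ((\<rho>@[x]) ! n) a ((\<rho>@[x]) ! Suc n)) = w Q \<sigma> \<rho> x"
    using assms n by (simp add: w_def nth_append last_conv_nth)
  finally show ?thesis .
qed

lemma path_prob_cong:
  assumes "\<And>\<rho>'. \<rho>' \<noteq> [] \<Longrightarrow> hd \<rho>' = hd \<rho> \<Longrightarrow> \<sigma> \<rho>' = \<sigma>' \<rho>'"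
  shows "path_prob Q \<sigma> \<rho> = path_prob Q \<sigma>' \<rho>"
  unfolding path_prob_def
  apply (rule prod.cong[OF refl])
  apply (rule sum.cong[OF refl])
proof -
  fix i a assume "i \<in> {..<length \<rho> - 1}"
  then have "\<rho> \<noteq> []" by auto
  then have "take (Suc i) \<rho> \<noteq> [] \<and> hd (take (Suc i) \<rho>) = hd \<rho>" by (cases \<rho>) auto
  then show "pmf (\<sigma> (take (Suc i) \<rho>)) a * Q (\<rho> ! i) a (\<rho> ! Suc i) = pmf (\<sigma>' (take (Suc i) \<rho>)) a * Q (\<rho> ! i) a (\<rho> ! Suc i)"
    using assms by simp
qed

lemma hd_len_Suc: "length \<pi> = Suc r \<Longrightarrow> hd \<pi> = \<pi> ! 0"
  by (cases \<pi>) auto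

lemma len_prob_cong:
  assumes "\<And>\<rho>'. \<rho>' \<noteq> [] \<Longrightarrow> hd \<rho>' = s \<Longrightarrow> \<sigma> \<rho>' = \<sigma>' \<rho>'"
  shows "len_prob Q \<sigma> T s r = len_prob Q \<sigma>' T s r"
  unfolding len_prob_def
  by (rule sum.cong[OF refl], rule path_prob_cong) (use assms in \<open>auto simp: hd_len_Suc\<close>)

lemma finite_len: "finite {\<pi>::('s::finite) list. length \<pi> = n \<and> P \<pi>}"
  using finite_lists_length_eq[of "UNIV::'s set" n] by (rule rev_finite_subset) auto

lemma len_prob_0: "len_prob Q \<sigma> T s 0 = (if s \<in> T then 1 else 0)"
proof -
  have "{\<rho>. length \<rho> = Suc 0 \<and> \<rho> ! 0 = s \<and> \<rho> ! 0 \<in> T \<and> (\<forall>i<0. \<rho> ! i \<notin> T)} = (if s \<in> T then {[s]} else {})"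
    by (auto simp: length_Suc_conv)
  then show ?thesis by (simp add: len_prob_def)
qed

lemma len_prob_Suc:
  fixes Q :: "'s::finite \<Rightarrow> 'a::finite \<Rightarrow> 's \<Rightarrow> real"
  shows "len_prob Q \<sigma> T s (Suc r) = (if s \<in> T then 0 else \<Sum>x\<in>UNIV. w Q \<sigma> [s] x * len_prob Q (shift \<sigma> s) T x r)"
proof (cases "s \<in> T")
  case True
  then have E: "{\<rho>. length \<rho> = Suc (Suc r) \<and> \<rho> ! 0 = s \<and> \<rho> ! Suc r \<in> T \<and> (\<forall>i<Suc r. \<rho> ! i \<notin> T)} = {}"
    by auto
  show ?thesis using True unfolding len_prob_def E by simp
next
  case False
  define C where "C = {\<pi>::'s list. length \<pi> = Suc r \<and> \<pi> ! r \<in> T \<and> (\<forall>i<r. \<pi> ! i \<notin> T)}"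
  have fin: "finite C" unfolding C_def by (rule finite_len)
  have A: "{\<rho>. length \<rho> = Suc (Suc r) \<and> \<rho> ! 0 = s \<and> \<rho> ! Suc r \<in> T \<and> (\<forall>i<Suc r. \<rho> ! i \<notin> T)} = Cons s ` C"
  proof (rule set_eqI, rule iffI)
    fix \<rho> assume "\<rho> \<in> {\<rho>. length \<rho> = Suc (Suc r) \<and> \<rho> ! 0 = s \<and> \<rho> ! Suc r \<in> T \<and> (\<forall>i<Suc r. \<rho> ! i \<notin> T)}"
    then obtain y \<pi> where h: "\<rho> = y # \<pi>" "length \<pi> = Suc r" "y = s" "\<pi> ! r \<in> T" "\<forall>i<Suc r. \<rho> ! i \<notin> T"
      by (cases \<rho>) auto
    have "\<forall>i<r. \<pi> ! i \<notin> T"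
    proof (intro allI impI)
      fix i assume "i < r"
      then have "\<rho> ! Suc i \<notin> T" using h(5) by simp
      then show "\<pi> ! i \<notin> T" using h(1) by simp
    qed
    then show "\<rho> \<in> Cons s ` C" unfolding C_def using h by auto
  next
    fix \<rho> assume "\<rho> \<in> Cons s ` C"
    then show "\<rho> \<in> {\<rho>. length \<rho> = Suc (Suc r) \<and> \<rho> ! 0 = s \<and> \<rho> ! Suc r \<in> T \<and> (\<forall>i<Suc r. \<rho> ! i \<notin> T)}"
      using False unfolding C_def by (auto simp: less_Suc_eq_0_disj)
  qed
  have "len_prob Q \<sigma> T s (Suc r) = (\<Sum>\<pi>\<in>C. path_prob Q \<sigma> (s # \<pi>))"
    unfolding len_prob_def A by (subst sum.reindex) (auto simp: inj_on_def)
  also have "\<dots> = (\<Sum>\<pi>\<in>C. \<Sum>x\<in>UNIV. if x = hd \<pi> then w Q \<sigma> [s] x * path_prob Q (shift \<sigma> s) \<pi> else 0)"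
  proof (rule sum.cong[OF refl])
    fix \<pi> assume "\<pi> \<in> C"
    then obtain y \<pi>' where "\<pi> = y # \<pi>'" unfolding C_def by (cases \<pi>) auto
    then show "path_prob Q \<sigma> (s # \<pi>) = (\<Sum>x\<in>UNIV. if x = hd \<pi> then w Q \<sigma> [s] x * path_prob Q (shift \<sigma> s) \<pi> else 0)"
      by (simp add: path_prob_Cons)
  qed
  also have "\<dots> = (\<Sum>x\<in>UNIV. \<Sum>\<pi>\<in>C. if x = hd \<pi> then w Q \<sigma> [s] x * path_prob Q (shift \<sigma> s) \<pi> else 0)"
    by (rule sum.swap)
  also have "\<dots> = (\<Sum>x\<in>UNIV. w Q \<sigma> [s] x * len_prob Q (shift \<sigma> s) T x r)"
  proof (rule sum.cong[OF refl])
    fix x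
    have "{\<pi>. length \<pi> = Suc r \<and> \<pi> ! 0 = x \<and> \<pi> ! r \<in> T \<and> (\<forall>i<r. \<pi> ! i \<notin> T)} = {\<pi>\<in>C. x = hd \<pi>}"
      unfolding C_def by (auto simp: hd_len_Suc)
    then have "len_prob Q (shift \<sigma> s) T x r = (\<Sum>\<pi>\<in>C. if x = hd \<pi> then path_prob Q (shift \<sigma> s) \<pi> else 0)"
      unfolding len_prob_def using fin by (simp add: sum.inter_filter)
    then show "(\<Sum>\<pi>\<in>C. if x = hd \<pi> then w Q \<sigma> [s] x * path_prob Q (shift \<sigma> s) \<pi> else 0) = w Q \<sigma> [s] x * len_prob Q (shift \<sigma> s) T x r"
      by (simp add: sum_distrib_left if_distrib cong: if_cong)
  qed
  finally show ?thesis using False by simp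
qed

lemma trans_nonneg: "0 \<le> trans P s a x"
  by (simp add: trans_def split: option.split)

lemma sum_trans: fixes P :: "('s::finite,'a) mdp" shows "legal P s a \<Longrightarrow> (\<Sum>x\<in>UNIV. trans P s a x) = 1"
proof -
  assume "legal P s a"
  then obtain d where "P s a = Some d" by (auto simp: legal_def)
  then show ?thesis by (simp add: trans_def) (rule sum_pmf_eq_1, auto)
qed

lemma w_sum_mult:
  "(\<Sum>x\<in>UNIV. w Q \<sigma> \<rho> x * g x) = (\<Sum>a\<in>UNIV. pmf (\<sigma> \<rho>) a * (\<Sum>x\<in>UNIV. Q (last \<rho>) a x * g x))"
proof -
  have "(\<Sum>x\<in>UNIV. w Q \<sigma> \<rho> x * g x) = (\<Sum>x\<in>UNIV. \<Sum>a\<in>UNIV. pmf (\<sigma> \<rho>) a * (Q (last \<rho>) a x * g x))"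
    by (simp add: w_def sum_distrib_right mult.assoc)
  also have "\<dots> = (\<Sum>a\<in>UNIV. \<Sum>x\<in>UNIV. pmf (\<sigma> \<rho>) a * (Q (last \<rho>) a x * g x))"
    by (rule sum.swap)
  also have "\<dots> = (\<Sum>a\<in>UNIV. pmf (\<sigma> \<rho>) a * (\<Sum>x\<in>UNIV. Q (last \<rho>) a x * g x))"
    by (simp add: sum_distrib_left)
  finally show ?thesis .
qed

lemma strat_supp: "is_strategy P \<sigma> \<Longrightarrow> \<rho> \<noteq> [] \<Longrightarrow> a \<in> set_pmf (\<sigma> \<rho>) \<Longrightarrow> legal P (last \<rho>) a"
  by (auto simp: is_strategy_def)

lemma sum_pmf_bound:
  fixes p :: "'a::finite pmf"
  assumes "\<And>a. a \<in> set_pmf p \<Longrightarrow> f a \<le> c"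
  shows "(\<Sum>a\<in>UNIV. pmf p a * f a) \<le> c"
proof -
  have "(\<Sum>a\<in>UNIV. pmf p a * f a) \<le> (\<Sum>a\<in>UNIV. pmf p a * c)"
  proof (rule sum_mono)
    fix a
    show "pmf p a * f a \<le> pmf p a * c"
    proof (cases "a \<in> set_pmf p")
      case True then show ?thesis using assms by (simp add: mult_left_mono)
    next
      case False then show ?thesis by (simp add: set_pmf_iff)
    qed
  qed
  also have "\<dots> = c" by (simp add: sum_distrib_right[symmetric] sum_pmf_eq_1)
  finally show ?thesis .
qed

lemma sum_pmf_eq:
  fixes p :: "'a::finite pmf"
  assumes "\<And>a. a \<in> set_pmf p \<Longrightarrow> f a = c"
  shows "(\<Sum>a\<in>UNIV. pmf p a * f a) = c"
proof -
  have "(\<Sum>a\<in>UNIV. pmf p a * f a) = (\<Sum>a\<in>UNIV. pmf p a * c)"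
  proof (rule sum.cong[OF refl])
    fix a
    show "pmf p a * f a = pmf p a * c"
      using assms by (cases "a \<in> set_pmf p") (auto simp: set_pmf_iff)
  qed
  also have "\<dots> = c" by (simp add: sum_distrib_right[symmetric] sum_pmf_eq_1)
  finally show ?thesis .
qed

lemma w_nonneg: "(\<And>s a x. 0 \<le> Q s a x) \<Longrightarrow> 0 \<le> w Q \<sigma> \<rho> x"
  unfolding w_def by (intro sum_nonneg mult_nonneg_nonneg) auto

lemma path_prob_nonneg: "(\<And>s a x. 0 \<le> Q s a x) \<Longrightarrow> 0 \<le> path_prob Q \<sigma> \<rho>"
  unfolding path_prob_def by (intro prod_nonneg sum_nonneg mult_nonneg_nonneg) auto

lemma len_prob_nonneg: "(\<And>s a x. 0 \<le> Q s a x) \<Longrightarrow> 0 \<le> len_prob Q \<sigma> T s r"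
  unfolding len_prob_def by (intro sum_nonneg path_prob_nonneg) auto

lemma shift_strategy: "is_strategy P \<sigma> \<Longrightarrow> is_strategy P (shift \<sigma> s)"
  unfolding is_strategy_def shift_def by (metis last_ConsR list.distinct(1))

lemma shift_pruned: assumes "is_pruned_strategy P T \<sigma>" shows "is_pruned_strategy P T (shift \<sigma> s)"
  unfolding is_pruned_strategy_def
proof (intro conjI allI impI ballI)
  show "is_strategy P (shift \<sigma> s)" using assms by (simp add: is_pruned_strategy_def shift_strategy)
  fix \<rho> a assume "\<rho> \<noteq> []" "a \<in> set_pmf (shift \<sigma> s \<rho>)"
  then show "(last \<rho>, a) \<in> Opt P T" using assms unfolding is_pruned_strategy_def shift_def
    by (metis last_ConsR list.distinct(1))
qed

lemma sum_w_trans: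
  fixes P :: "('s::finite,'a::finite) mdp"
  assumes "is_strategy P \<sigma>" "\<rho> \<noteq> []"
  shows "(\<Sum>x\<in>UNIV. w (trans P) \<sigma> \<rho> x) = 1"
proof -
  have "(\<Sum>x\<in>UNIV. w (trans P) \<sigma> \<rho> x) = (\<Sum>x\<in>UNIV. w (trans P) \<sigma> \<rho> x * 1)" by simp
  also have "\<dots> = (\<Sum>a\<in>UNIV. pmf (\<sigma> \<rho>) a * (\<Sum>x\<in>UNIV. trans P (last \<rho>) a x * 1))"
    by (rule w_sum_mult)
  also have "\<dots> = 1"
    by (rule sum_pmf_eq) (simp add: sum_trans[OF strat_supp[OF assms]])
  finally show ?thesis .
qed

lemma hit_bound:
  assumes strat: "is_strategy P \<sigma>"
    and g0: "\<And>s. 0 \<le> g s" and gT: "\<And>s. s \<in> T \<Longrightarrow> 1 \<le> g s"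
    and sh: "\<And>s a. s \<notin> T \<Longrightarrow> legal P s a \<Longrightarrow> (\<Sum>x\<in>UNIV. trans P s a x * g x) \<le> g s"
  shows "(\<Sum>r<n. len_prob (trans P) \<sigma> T s r) \<le> g s"
  using strat
proof (induction n arbitrary: \<sigma> s)
  case 0 then show ?case by (simp add: g0)
next
  case (Suc n)
  have strat': "is_strategy P (shift \<sigma> s)" using Suc.prems by (rule shift_strategy)
  show ?case
  proof (cases "s \<in> T")
    case True
    then show ?thesis by (simp add: sum.lessThan_Suc_shift len_prob_0 len_prob_Suc gT del: sum.lessThan_Suc)
  next
    case False
    have "(\<Sum>r<Suc n. len_prob (trans P) \<sigma> T s r) = (\<Sum>r<n. \<Sum>x\<in>UNIV. w (trans P) \<sigma> [s] x * len_prob (trans P) (shift \<sigma> s) T x r)"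
      using False by (simp add: sum.lessThan_Suc_shift len_prob_0 len_prob_Suc del: sum.lessThan_Suc)
    also have "\<dots> = (\<Sum>x\<in>UNIV. w (trans P) \<sigma> [s] x * (\<Sum>r<n. len_prob (trans P) (shift \<sigma> s) T x r))"
      by (simp add: sum_distrib_left) (rule sum.swap)
    also have "\<dots> \<le> (\<Sum>x\<in>UNIV. w (trans P) \<sigma> [s] x * g x)"
      by (intro sum_mono mult_left_mono Suc.IH strat' w_nonneg trans_nonneg)
    also have "\<dots> = (\<Sum>a\<in>UNIV. pmf (\<sigma> [s]) a * (\<Sum>x\<in>UNIV. trans P s a x * g x))"
      by (simp add: w_sum_mult)
    also have "\<dots> \<le> g s"
      by (rule sum_pmf_bound) (use False Suc.prems in \<open>auto intro!: sh dest: strat_supp\<close>)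
    finally show ?thesis .
  qed
qed

lemma len_summable:
  assumes "is_strategy P \<sigma>"
  shows "summable (\<lambda>r. len_prob (trans P) \<sigma> T s r)"
proof (rule bounded_imp_summable)
  show "0 \<le> len_prob (trans P) \<sigma> T s n" for n by (rule len_prob_nonneg) (rule trans_nonneg)
  show "sum (\<lambda>r. len_prob (trans P) \<sigma> T s r) {..n} \<le> 1" for n
    using hit_bound[OF assms, where g="\<lambda>_. 1" and T=T and n="Suc n" and s=s]
    by (simp add: lessThan_Suc_atMost sum_trans)
qed

lemma reach_le_g:
  assumes strat: "is_strategy P \<sigma>"
    and g0: "\<And>s. 0 \<le> g s" and gT: "\<And>s. s \<in> T \<Longrightarrow> 1 \<le> g s"
    and sh: "\<And>s a. s \<notin> T \<Longrightarrow> legal P s a \<Longrightarrow> (\<Sum>x\<in>UNIV. trans P s a x * g x) \<le> g s"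
  shows "reach_prob (trans P) \<sigma> T s \<le> g s"
  unfolding reach_prob_def
  by (rule suminf_le_const[OF len_summable[OF strat]]) (rule hit_bound[OF assms])

lemma reach_nonneg: "is_strategy P \<sigma> \<Longrightarrow> 0 \<le> reach_prob (trans P) \<sigma> T s"
  unfolding reach_prob_def by (intro suminf_nonneg len_summable len_prob_nonneg trans_nonneg)

lemma reach_le1: "is_strategy P \<sigma> \<Longrightarrow> reach_prob (trans P) \<sigma> T s \<le> 1"
  by (rule reach_le_g[where g="\<lambda>_. 1"]) (auto simp: sum_trans)

lemma len_le_reach:
  assumes "is_strategy P \<sigma>"
  shows "len_prob (trans P) \<sigma> T s r \<le> reach_prob (trans P) \<sigma> T s"
proof -
  have "sum (\<lambda>r. len_prob (trans P) \<sigma> T s r) {r} \<le> (\<Sum>r. len_prob (trans P) \<sigma> T s r)"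
    by (rule sum_le_suminf) (auto intro: len_summable assms len_prob_nonneg trans_nonneg)
  then show ?thesis by (simp add: reach_prob_def)
qed

lemma reach_decomp:
  assumes "is_strategy P \<sigma>" "s \<notin> T"
  shows "reach_prob (trans P) \<sigma> T s = (\<Sum>x\<in>UNIV. w (trans P) \<sigma> [s] x * reach_prob (trans P) (shift \<sigma> s) T x)"
proof -
  have sm: "summable (\<lambda>r. len_prob (trans P) \<sigma> T s r)" using assms(1) by (rule len_summable)
  have "reach_prob (trans P) \<sigma> T s = (\<Sum>r. len_prob (trans P) \<sigma> T s (Suc r))"
    using suminf_split_head[OF sm] assms by (simp add: reach_prob_def len_prob_0)
  also have "\<dots> = (\<Sum>r. \<Sum>x\<in>UNIV. w (trans P) \<sigma> [s] x * len_prob (trans P) (shift \<sigma> s) T x r)"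
    using assms by (simp add: len_prob_Suc)
  also have "\<dots> = (\<Sum>x\<in>UNIV. \<Sum>r. w (trans P) \<sigma> [s] x * len_prob (trans P) (shift \<sigma> s) T x r)"
    by (rule suminf_sum) (intro summable_mult len_summable shift_strategy assms)
  also have "\<dots> = (\<Sum>x\<in>UNIV. w (trans P) \<sigma> [s] x * reach_prob (trans P) (shift \<sigma> s) T x)"
    by (simp add: suminf_mult len_summable shift_strategy assms reach_prob_def)
  finally show ?thesis .
qed

lemma reach_T:
  assumes "s \<in> T"
  shows "reach_prob Q \<sigma> T s = 1"
proof -
  have "(\<lambda>r. len_prob Q \<sigma> T s r) = (\<lambda>r. if r = 0 then 1 else 0)"
    by (rule ext, case_tac r) (simp_all add: len_prob_0 len_prob_Suc assms)
  then show ?thesis unfolding reach_prob_def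
    using sums_single[of 0 "\<lambda>_. 1::real"] by (simp add: sums_iff)
qed



lemma pruned_strat: "is_pruned_strategy P T \<sigma> \<Longrightarrow> is_strategy P \<sigma>"
  by (simp add: is_pruned_strategy_def)

locale mdpc =
  fixes P :: "('s::finite, 'a::finite) mdp" and T :: "'s set" and \<sigma>0 :: "'s list \<Rightarrow> 'a pmf"
  assumes sinks: "sinks P T" and strat0: "is_pruned_strategy P T \<sigma>0"
begin

abbreviation V where "V \<equiv> Val P T"
abbreviation R where "R \<sigma> s \<equiv> reach_prob (trans P) \<sigma> T s"

lemma strat0': "is_strategy P \<sigma>0" using strat0 by (rule pruned_strat)

lemma bdd: "bdd_above ((\<lambda>\<sigma>. reach_prob (trans P) \<sigma> T s) ` {\<sigma>. is_strategy P \<sigma>})"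
  by (rule bdd_aboveI[where M=1]) (auto intro: reach_le1)

lemma reach_le_Val: "is_strategy P \<sigma> \<Longrightarrow> R \<sigma> s \<le> V s"
  unfolding Val_def by (rule cSUP_upper) (auto simp: bdd)

lemma Val_le: "(\<And>\<sigma>. is_strategy P \<sigma> \<Longrightarrow> R \<sigma> s \<le> c) \<Longrightarrow> V s \<le> c"
  unfolding Val_def by (rule cSUP_least) (use strat0' in auto)

lemma Val_nonneg: "0 \<le> V s"
  using reach_nonneg[OF strat0'] reach_le_Val[OF strat0'] by (rule order_trans)

lemma Val_le1: "V s \<le> 1"
  by (rule Val_le) (rule reach_le1)

lemma Val_T: "s \<in> T \<Longrightarrow> V s = 1"
  using Val_le1[of s] reach_le_Val[OF strat0', of s] reach_T[of s T "trans P" \<sigma>0] by simp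

lemma sink_trans:
  assumes "t \<in> T" "legal P t a"
  shows "trans P t a x = (if x = t then 1 else 0)"
proof -
  obtain a0 where "\<forall>b. legal P t b \<longleftrightarrow> b = a0" "P t a0 = Some (return_pmf t)"
    using sinks assms(1) unfolding sinks_def by blast
  then show ?thesis using assms(2) by (auto simp: trans_def)
qed

lemma Opt_T:
  assumes "t \<in> T" "legal P t a"
  shows "(t, a) \<in> Opt P T"
proof -
  have "(\<Sum>x\<in>UNIV. trans P t a x * V x) = (\<Sum>x\<in>UNIV. if x = t then V x else 0)"
    by (rule sum.cong[OF refl]) (simp add: sink_trans[OF assms])
  then show ?thesis using assms unfolding Opt_def by simp
qed

lemma Val_legal_le:
  assumes leg: "legal P s a"
  shows "(\<Sum>x\<in>UNIV. trans P s a x * V x) \<le> V s"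
proof (cases "s \<in> T")
  case True
  have "(\<Sum>x\<in>UNIV. trans P s a x * V x) \<le> (\<Sum>x\<in>UNIV. trans P s a x * 1)"
    by (intro sum_mono mult_left_mono Val_le1 trans_nonneg)
  also have "\<dots> = V s" using True by (simp add: sum_trans leg Val_T)
  finally show ?thesis .
next
  case False
  show ?thesis
  proof (rule field_le_epsilon)
    fix e :: real assume e: "0 < e"
    have "\<forall>x. \<exists>\<tau>. is_strategy P \<tau> \<and> V x - e < R \<tau> x"
    proof
      fix x
      have ne: "{\<sigma>. is_strategy P \<sigma>} \<noteq> {}" using strat0' by blast
      have "V x - e < V x" using e by simp
      then have "V x - e < (SUP \<sigma>\<in>{\<sigma>. is_strategy P \<sigma>}. R \<sigma> x)" by (simp only: Val_def)
      then have "\<exists>\<tau>\<in>{\<sigma>. is_strategy P \<sigma>}. V x - e < R \<tau> x"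
        by (rule less_cSUP_iff[OF ne bdd, THEN iffD1])
      then show "\<exists>\<tau>. is_strategy P \<tau> \<and> V x - e < R \<tau> x" by auto
    qed
    from choice[OF this] obtain \<tau> where \<tau>: "\<forall>x. is_strategy P (\<tau> x) \<and> V x - e < R (\<tau> x) x"
      by auto
    define \<sigma>' where "\<sigma>' \<rho> = (if \<rho> = [s] then return_pmf a else if 2 \<le> length \<rho> \<and> hd \<rho> = s then \<tau> (\<rho>!1) (tl \<rho>) else \<sigma>0 \<rho>)" for \<rho>
    have st: "is_strategy P \<sigma>'"
      unfolding is_strategy_def
    proof (intro allI impI)
      fix \<rho> :: "'s list" assume ne: "\<rho> \<noteq> []"
      show "set_pmf (\<sigma>' \<rho>) \<subseteq> {b. legal P (last \<rho>) b}"
      proof (cases "\<rho> = [s]")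
        case True then show ?thesis using leg by (simp add: \<sigma>'_def)
      next
        case F1: False
        show ?thesis
        proof (cases "2 \<le> length \<rho> \<and> hd \<rho> = s")
          case True
          then have tl: "tl \<rho> \<noteq> []" "last (tl \<rho>) = last \<rho>" by (cases \<rho>; auto)+
          have "\<sigma>' \<rho> = \<tau> (\<rho>!1) (tl \<rho>)" using True F1 by (simp add: \<sigma>'_def)
          moreover have "is_strategy P (\<tau> (\<rho>!1))" using \<tau> by blast
          ultimately show ?thesis using tl unfolding is_strategy_def by metis
        next
          case False
          then have "\<sigma>' \<rho> = \<sigma>0 \<rho>" using F1 unfolding \<sigma>'_def by auto
          then show ?thesis using strat0' ne unfolding is_strategy_def by metis
        qed
      qed
    qed
    have wa: "w (trans P) \<sigma>' [s] x = trans P s a x" for x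
      by (simp add: w_def \<sigma>'_def pmf_return indicator_def)
    have ra: "R (shift \<sigma>' s) x = R (\<tau> x) x" for x
      unfolding reach_prob_def
    proof (rule arg_cong[where f=suminf], rule ext, rule len_prob_cong)
      fix r and \<rho>' :: "'s list" assume "\<rho>' \<noteq> []" "hd \<rho>' = x"
      then show "shift \<sigma>' s \<rho>' = \<tau> x \<rho>'"
        by (cases \<rho>') (auto simp: shift_def \<sigma>'_def)
    qed
    have "(\<Sum>x\<in>UNIV. trans P s a x * (V x - e)) = (\<Sum>x\<in>UNIV. trans P s a x * V x) - (\<Sum>x\<in>UNIV. trans P s a x * e)"
      by (simp add: right_diff_distrib sum_subtractf)
    moreover have "(\<Sum>x\<in>UNIV. trans P s a x * e) = e"
      using sum_trans[OF leg] by (simp add: sum_distrib_right[symmetric])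
    ultimately have "(\<Sum>x\<in>UNIV. trans P s a x * V x) - e = (\<Sum>x\<in>UNIV. trans P s a x * (V x - e))"
      by simp
    also have "\<dots> \<le> (\<Sum>x\<in>UNIV. trans P s a x * R (\<tau> x) x)"
      using \<tau> by (intro sum_mono mult_left_mono trans_nonneg) (auto intro: less_imp_le)
    also have "\<dots> = R \<sigma>' s"
      using reach_decomp[OF st False] by (simp add: wa ra)
    also have "\<dots> \<le> V s" by (rule reach_le_Val[OF st])
    finally show "(\<Sum>x\<in>UNIV. trans P s a x * V x) \<le> V s + e" by simp
  qed
qed

lemma wV_le:
  assumes "is_strategy P \<sigma>" "\<rho> \<noteq> []"
  shows "(\<Sum>y\<in>UNIV. w (trans P) \<sigma> \<rho> y * V y) \<le> V (last \<rho>)"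
  unfolding w_sum_mult
  by (rule sum_pmf_bound) (use assms in \<open>auto intro: Val_legal_le strat_supp\<close>)

lemma decomp_le:
  assumes "is_strategy P \<sigma>" "s \<notin> T"
  shows "R \<sigma> s \<le> (\<Sum>y\<in>UNIV. w (trans P) \<sigma> [s] y * V y)"
  unfolding reach_decomp[OF assms]
  by (intro sum_mono mult_left_mono reach_le_Val shift_strategy assms(1) w_nonneg trans_nonneg)

lemma conserving:
  assumes "is_strategy P \<sigma>" "R \<sigma> s = V s" "path_prob (trans P) \<sigma> (s # \<pi>) > 0" "a \<in> set_pmf (\<sigma> (s # \<pi>))"
  shows "(last (s # \<pi>), a) \<in> Opt P T"
  using assms
proof (induction \<pi> arbitrary: \<sigma> s)
  case Nil
  have leg: "legal P s a" using strat_supp[OF Nil.prems(1) _ Nil.prems(4)] by simp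
  show ?case
  proof (cases "s \<in> T")
    case True then show ?thesis using Opt_T leg by simp
  next
    case False
    define c where "c b = (\<Sum>x\<in>UNIV. trans P s b x * V x)" for b
    have "V s = R \<sigma> s" using Nil.prems(2) by simp
    also have "\<dots> \<le> (\<Sum>x\<in>UNIV. w (trans P) \<sigma> [s] x * V x)" by (rule decomp_le) (use Nil.prems False in auto)
    also have "\<dots> = (\<Sum>b\<in>UNIV. pmf (\<sigma> [s]) b * c b)" by (simp add: w_sum_mult c_def)
    finally have le: "V s \<le> (\<Sum>b\<in>UNIV. pmf (\<sigma> [s]) b * c b)" .
    have cle: "c b \<le> V s" if "b \<in> set_pmf (\<sigma> [s])" for b
      using Val_legal_le strat_supp[OF Nil.prems(1) _ that] by (simp add: c_def)
    have "(\<Sum>b\<in>UNIV. pmf (\<sigma> [s]) b * (V s - c b)) = (\<Sum>b\<in>UNIV. pmf (\<sigma> [s]) b * V s) - (\<Sum>b\<in>UNIV. pmf (\<sigma> [s]) b * c b)"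
      by (simp add: right_diff_distrib sum_subtractf)
    also have "(\<Sum>b\<in>UNIV. pmf (\<sigma> [s]) b * V s) = V s" by (rule sum_pmf_eq) simp
    finally have "(\<Sum>b\<in>UNIV. pmf (\<sigma> [s]) b * (V s - c b)) \<le> 0" using le by simp
    moreover have nn: "\<forall>b\<in>UNIV. 0 \<le> pmf (\<sigma> [s]) b * (V s - c b)"
    proof
      fix b show "0 \<le> pmf (\<sigma> [s]) b * (V s - c b)"
        using cle[of b] by (cases "b \<in> set_pmf (\<sigma> [s])") (auto simp: set_pmf_iff)
    qed
    moreover have "0 \<le> (\<Sum>b\<in>UNIV. pmf (\<sigma> [s]) b * (V s - c b))"
      by (rule sum_nonneg) (use nn in auto)
    ultimately have "(\<Sum>b\<in>UNIV. pmf (\<sigma> [s]) b * (V s - c b)) = 0"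
      by linarith
    then have "pmf (\<sigma> [s]) a * (V s - c a) = 0"
      using sum_nonneg_eq_0_iff[of UNIV "\<lambda>b. pmf (\<sigma> [s]) b * (V s - c b)"] nn by auto
    moreover have "pmf (\<sigma> [s]) a \<noteq> 0" using Nil.prems(4) by (simp add: set_pmf_iff)
    ultimately have "c a = V s" by simp
    then show ?thesis using leg by (simp add: Opt_def c_def)
  qed
next
  case (Cons x \<pi>)
  have pp: "path_prob (trans P) \<sigma> (s # x # \<pi>) = w (trans P) \<sigma> [s] x * path_prob (trans P) (shift \<sigma> s) (x # \<pi>)"
    by (rule path_prob_Cons)
  have w0: "0 \<le> w (trans P) \<sigma> [s] x" by (rule w_nonneg) (rule trans_nonneg)
  have p0: "0 \<le> path_prob (trans P) (shift \<sigma> s) (x # \<pi>)" by (rule path_prob_nonneg) (rule trans_nonneg)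
  have wpos: "0 < w (trans P) \<sigma> [s] x" and ppos: "0 < path_prob (trans P) (shift \<sigma> s) (x # \<pi>)"
    using Cons.prems(3) w0 p0 unfolding pp by (auto simp: zero_less_mult_iff)
  have st': "is_strategy P (shift \<sigma> s)" using Cons.prems(1) by (rule shift_strategy)
  have Rx: "R (shift \<sigma> s) x = V x"
  proof (cases "s \<in> T")
    case True
    have "w (trans P) \<sigma> [s] x = (if x = s then 1 else 0)"
      unfolding w_def by (rule sum_pmf_eq) (use True Cons.prems(1) in \<open>auto dest: strat_supp simp: sink_trans\<close>)
    then have "x = s" using wpos by (auto split: if_splits)
    then show ?thesis using True by (simp add: reach_T Val_T)
  next
    case False
    have "V s = R \<sigma> s" using Cons.prems(2) by simp
    also have "\<dots> = (\<Sum>y\<in>UNIV. w (trans P) \<sigma> [s] y * R (shift \<sigma> s) y)" by (rule reach_decomp) (use Cons.prems False in auto)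
    finally have e1: "V s = (\<Sum>y\<in>UNIV. w (trans P) \<sigma> [s] y * R (shift \<sigma> s) y)" .
    have e2: "(\<Sum>y\<in>UNIV. w (trans P) \<sigma> [s] y * V y) \<le> V s"
      using wV_le[OF Cons.prems(1), of "[s]"] by simp
    have "(\<Sum>y\<in>UNIV. w (trans P) \<sigma> [s] y * (V y - R (shift \<sigma> s) y)) = (\<Sum>y\<in>UNIV. w (trans P) \<sigma> [s] y * V y) - (\<Sum>y\<in>UNIV. w (trans P) \<sigma> [s] y * R (shift \<sigma> s) y)"
      by (simp add: right_diff_distrib sum_subtractf)
    also have "\<dots> \<le> 0" using e1 e2 by simp
    finally have le0: "(\<Sum>y\<in>UNIV. w (trans P) \<sigma> [s] y * (V y - R (shift \<sigma> s) y)) \<le> 0" .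
    have nn: "\<forall>y\<in>UNIV. 0 \<le> w (trans P) \<sigma> [s] y * (V y - R (shift \<sigma> s) y)"
      using reach_le_Val[OF st'] by (auto intro!: mult_nonneg_nonneg w_nonneg trans_nonneg)
    have "(\<Sum>y\<in>UNIV. w (trans P) \<sigma> [s] y * (V y - R (shift \<sigma> s) y)) = 0"
      using le0 sum_nonneg[of UNIV "\<lambda>y. w (trans P) \<sigma> [s] y * (V y - R (shift \<sigma> s) y)"] nn by auto
    then have "w (trans P) \<sigma> [s] x * (V x - R (shift \<sigma> s) x) = 0"
      using sum_nonneg_eq_0_iff[of UNIV "\<lambda>y. w (trans P) \<sigma> [s] y * (V y - R (shift \<sigma> s) y)"] nn by auto
    then show ?thesis using wpos by simp
  qed
  have "(last (x # \<pi>), a) \<in> Opt P T"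
    by (rule Cons.IH[OF st' Rx ppos]) (use Cons.prems(4) in \<open>simp add: shift_def\<close>)
  then show ?case by simp
qed

definition modify :: "('s list \<Rightarrow> 'a pmf) \<Rightarrow> 's list \<Rightarrow> 'a pmf" where
  "modify \<sigma> \<rho> = (if (\<forall>a\<in>set_pmf (\<sigma> \<rho>). (last \<rho>, a) \<in> Opt P T) then \<sigma> \<rho> else \<sigma>0 \<rho>)"

lemma modify_pruned:
  assumes "is_strategy P \<sigma>"
  shows "is_pruned_strategy P T (modify \<sigma>)"
  unfolding is_pruned_strategy_def
proof (intro conjI allI impI ballI)
  show "is_strategy P (modify \<sigma>)" unfolding is_strategy_def
  proof (intro allI impI)
    fix \<rho> :: "'s list" assume ne: "\<rho> \<noteq> []"
    show "set_pmf (modify \<sigma> \<rho>) \<subseteq> {a. legal P (last \<rho>) a}"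
      using assms strat0' ne unfolding modify_def is_strategy_def by (cases "\<forall>a\<in>set_pmf (\<sigma> \<rho>). (last \<rho>, a) \<in> Opt P T") simp_all
  qed
next
  fix \<rho> :: "'s list" and a assume ne: "\<rho> \<noteq> []" "a \<in> set_pmf (modify \<sigma> \<rho>)"
  then show "(last \<rho>, a) \<in> Opt P T"
    using strat0 unfolding modify_def is_pruned_strategy_def by (auto split: if_splits)
qed

lemma modify_pp:
  assumes "is_strategy P \<sigma>" "R \<sigma> s = V s"
  shows "\<rho> \<noteq> [] \<Longrightarrow> hd \<rho> = s \<Longrightarrow> path_prob (trans P) (modify \<sigma>) \<rho> = path_prob (trans P) \<sigma> \<rho>"
proof (induction \<rho> rule: rev_induct)
  case Nil then show ?case by simp
next
  case (snoc x \<rho>)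
  show ?case
  proof (cases "\<rho> = []")
    case True then show ?thesis by simp
  next
    case False
    have hd: "hd \<rho> = s" using snoc.prems False by simp
    have IH: "path_prob (trans P) (modify \<sigma>) \<rho> = path_prob (trans P) \<sigma> \<rho>" using snoc.IH False hd by simp
    show ?thesis
    proof (cases "path_prob (trans P) \<sigma> \<rho> = 0")
      case True then show ?thesis using False IH by (simp add: path_prob_snoc)
    next
      case pos: False
      have "0 \<le> path_prob (trans P) \<sigma> \<rho>" by (rule path_prob_nonneg) (rule trans_nonneg)
      then have "path_prob (trans P) \<sigma> \<rho> > 0"
        using pos by (simp add: less_le)
      moreover have r: "\<rho> = s # tl \<rho>" using False hd by (cases \<rho>) auto
      ultimately have "\<forall>a\<in>set_pmf (\<sigma> \<rho>). (last \<rho>, a) \<in> Opt P T"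
        using conserving[OF assms, of "tl \<rho>"] by simp
      then have "modify \<sigma> \<rho> = \<sigma> \<rho>" by (simp add: modify_def)
      then show ?thesis using False IH by (simp add: path_prob_snoc w_def)
    qed
  qed
qed

lemma modify_len:
  assumes "is_strategy P \<sigma>" "R \<sigma> s = V s"
  shows "len_prob (trans P) (modify \<sigma>) T s r = len_prob (trans P) \<sigma> T s r"
  unfolding len_prob_def
  by (rule sum.cong[OF refl], rule modify_pp[OF assms]) (auto simp: hd_len_Suc)

lemma telescope:
  assumes "is_pruned_strategy P T \<sigma>"
  shows "len_prob (pruned_trans P T) \<sigma> T s r = len_prob (trans P) \<sigma> T s r / V s"
  using assms
proof (induction r arbitrary: \<sigma> s)
  case 0 show ?case by (simp add: len_prob_0 Val_T)
next
  case (Suc r)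
  have strat: "is_strategy P \<sigma>" using Suc.prems by (rule pruned_strat)
  show ?case
  proof (cases "s \<in> T")
    case True then show ?thesis by (simp add: len_prob_Suc)
  next
    case False
    have wp: "w (pruned_trans P T) \<sigma> [s] x = (if V s > 0 then w (trans P) \<sigma> [s] x * V x / V s else 0)" for x
    proof -
      have "w (pruned_trans P T) \<sigma> [s] x = (\<Sum>b\<in>UNIV. pmf (\<sigma> [s]) b * (if V s > 0 then trans P s b x * V x / V s else 0))"
        unfolding w_def
      proof (rule sum.cong[OF refl])
        fix b
        show "pmf (\<sigma> [s]) b * pruned_trans P T (last [s]) b x = pmf (\<sigma> [s]) b * (if V s > 0 then trans P s b x * V x / V s else 0)"
        proof (cases "b \<in> set_pmf (\<sigma> [s])")
          case True
          then have "(s, b) \<in> Opt P T" using Suc.prems unfolding is_pruned_strategy_def by force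
          then show ?thesis by (simp add: pruned_trans_def)
        next
          case False then show ?thesis by (simp add: set_pmf_iff)
        qed
      qed
      also have "\<dots> = (if V s > 0 then w (trans P) \<sigma> [s] x * V x / V s else 0)"
        by (simp add: w_def sum_distrib_right sum_divide_distrib mult.assoc)
      finally show ?thesis .
    qed
    have "len_prob (pruned_trans P T) \<sigma> T s (Suc r) = (\<Sum>x\<in>UNIV. w (pruned_trans P T) \<sigma> [s] x * len_prob (pruned_trans P T) (shift \<sigma> s) T x r)"
      using False by (simp add: len_prob_Suc)
    also have "\<dots> = (\<Sum>x\<in>UNIV. w (pruned_trans P T) \<sigma> [s] x * (len_prob (trans P) (shift \<sigma> s) T x r / V x))"
      using Suc.IH[OF shift_pruned[OF Suc.prems]] by simp
    also have "\<dots> = (\<Sum>x\<in>UNIV. w (trans P) \<sigma> [s] x * len_prob (trans P) (shift \<sigma> s) T x r / V s)"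
    proof (rule sum.cong[OF refl])
      fix x
      have l0: "0 \<le> len_prob (trans P) (shift \<sigma> s) T x r" by (rule len_prob_nonneg) (rule trans_nonneg)
      have l1: "len_prob (trans P) (shift \<sigma> s) T x r \<le> V x"
        using len_le_reach[OF shift_strategy[OF strat]] reach_le_Val[OF shift_strategy[OF strat]] by (rule order_trans)
      show "w (pruned_trans P T) \<sigma> [s] x * (len_prob (trans P) (shift \<sigma> s) T x r / V x) = w (trans P) \<sigma> [s] x * len_prob (trans P) (shift \<sigma> s) T x r / V s"
      proof (cases "V s > 0")
        case vs: True
        show ?thesis
        proof (cases "V x = 0")
          case True
          then have "len_prob (trans P) (shift \<sigma> s) T x r = 0" using l0 l1 by simp
          then show ?thesis by (simp add: wp)
        next
          case False
          then show ?thesis using vs by (simp add: wp field_simps)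
        qed
      next
        case False
        then have "V s = 0" using Val_nonneg[of s] by simp
        then show ?thesis by (simp add: wp)
      qed
    qed
    also have "\<dots> = len_prob (trans P) \<sigma> T s (Suc r) / V s"
      using False by (simp add: len_prob_Suc sum_divide_distrib)
    finally show ?thesis .
  qed
qed

end



context mdpc begin

lemma pt_nonneg: "0 \<le> pruned_trans P T s a x"
  by (simp add: pruned_trans_def trans_nonneg Val_nonneg)

fun attr :: "nat \<Rightarrow> 's set" where
  "attr 0 = T"
| "attr (Suc j) = attr j \<union> {s. 0 < V s \<and> (\<exists>a x. (s,a) \<in> Opt P T \<and> x \<in> attr j \<and> 0 < trans P s a x)}"

lemma attr_pos: "s \<in> attr j \<Longrightarrow> 0 < V s"
  by (induction j) (auto simp: Val_T)

lemma all_in_attr: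
  assumes "0 < V s0"
  shows "\<exists>j. s0 \<in> attr j"
proof (rule ccontr)
  assume nA: "\<nexists>j. s0 \<in> attr j"
  define Rs where "Rs = (\<Union>j. attr j)"
  define U where "U = {s. 0 < V s \<and> s \<notin> Rs}"
  have s0U: "s0 \<in> U" using assms nA by (auto simp: U_def Rs_def)
  have finU: "finite U" by simp
  define M where "M = Max (V ` U)"
  have VM: "V s \<le> M" if "s \<in> U" for s unfolding M_def using finU that by (intro Max_ge) auto
  have "M \<in> V ` U" unfolding M_def using finU s0U by (intro Max_in) auto
  then obtain sM where sM: "sM \<in> U" "V sM = M" by auto
  define UM where "UM = {s \<in> U. V s = M}"
  have Mpos: "0 < M" using sM by (simp add: U_def)
  have TR: "T \<subseteq> Rs" unfolding Rs_def using attr.simps(1) by blast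
  have closed: "s \<in> Rs" if "0 < V s" "(s,a) \<in> Opt P T" "y \<in> Rs" "0 < trans P s a y" for s a y
  proof -
    from \<open>y \<in> Rs\<close> obtain j where "y \<in> attr j" by (auto simp: Rs_def)
    then have "s \<in> attr (Suc j)" using that by auto
    then show ?thesis unfolding Rs_def by (rule UN_I[OF UNIV_I])
  qed
  have stay: "y \<in> UM" if s: "s \<in> UM" and opt: "(s,a) \<in> Opt P T" and tp: "0 < trans P s a y" for s a y
  proof -
    have leg: "legal P s a" using opt by (simp add: Opt_def)
    have sU: "s \<in> U" "V s = M" using s by (auto simp: UM_def)
    have notR: "z \<notin> Rs" if "0 < trans P s a z" "0 < V z" for z
      using closed[of s a z] sU opt that by (auto simp: U_def)
    have le: "0 \<le> trans P s a z * M - trans P s a z * V z" for z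
    proof (cases "0 < trans P s a z")
      case tz: True
      show ?thesis
      proof (cases "0 < V z")
        case True
        then have "z \<in> U" using notR[OF tz] by (simp add: U_def)
        then have "V z \<le> M" by (rule VM)
        then show ?thesis using tz by (simp add: mult_left_mono)
      next
        case False then have "V z \<le> M" using Mpos by simp
        then show ?thesis using tz by (simp add: mult_left_mono)
      qed
    next
      case False
      then have "trans P s a z = 0" using trans_nonneg[of P s a z] by simp
      then show ?thesis by simp
    qed
    have e1: "M = (\<Sum>z\<in>UNIV. trans P s a z * V z)" using opt sU by (simp add: Opt_def)
    have e2: "(\<Sum>z\<in>UNIV. trans P s a z * M) = M" using sum_trans[OF leg] by (simp add: sum_distrib_right[symmetric])
    have "(\<Sum>z\<in>UNIV. trans P s a z * M - trans P s a z * V z) = 0"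
      using e1 e2 by (simp add: sum_subtractf)
    then have "trans P s a y * M - trans P s a y * V y = 0"
      using sum_nonneg_eq_0_iff[of UNIV "\<lambda>z. trans P s a z * M - trans P s a z * V z"] le by auto
    then have "trans P s a y * (M - V y) = 0" by (simp add: right_diff_distrib)
    then have "V y = M" using tp by simp
    then show ?thesis using notR[OF tp] Mpos by (simp add: UM_def U_def)
  qed
  define E where "E = {(s,a). s \<in> UM \<and> legal P s a \<and> (s,a) \<notin> Opt P T}"
  define gap where "gap = (\<lambda>(s,a). M - (\<Sum>y\<in>UNIV. trans P s a y * V y))"
  define \<epsilon> where "\<epsilon> = Min (insert (M/2) (gap ` E))"
  have finE: "finite (insert (M/2) (gap ` E))" by simp
  have gap_pos: "0 < gap p" if "p \<in> E" for p
  proof -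
    obtain s a where p: "p = (s,a)" by (cases p)
    have h: "s \<in> UM" "legal P s a" "(s,a) \<notin> Opt P T" using that p by (auto simp: E_def)
    then have "(\<Sum>y\<in>UNIV. trans P s a y * V y) \<le> V s" "V s = M" "V s \<noteq> (\<Sum>y\<in>UNIV. trans P s a y * V y)"
      using Val_legal_le by (auto simp: UM_def Opt_def)
    then show ?thesis by (simp add: gap_def p)
  qed
  have \<epsilon>pos: "0 < \<epsilon>" unfolding \<epsilon>_def using finE Mpos gap_pos by (subst Min_gr_iff) auto
  have \<epsilon>M: "\<epsilon> \<le> M/2" unfolding \<epsilon>_def using finE by (intro Min_le) auto
  have \<epsilon>gap: "\<epsilon> \<le> gap p" if "p \<in> E" for p unfolding \<epsilon>_def using finE that by (intro Min_le) auto
  define g where "g s = (if s \<in> UM then M - \<epsilon> else V s)" for s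
  have gV: "g s \<le> V s" for s using \<epsilon>pos by (auto simp: g_def UM_def)
  have UMnT: "s \<notin> T" if "s \<in> UM" for s using TR that by (auto simp: UM_def U_def)
  have sh: "(\<Sum>y\<in>UNIV. trans P s a y * g y) \<le> g s" if "s \<notin> T" "legal P s a" for s a
  proof -
    have base: "(\<Sum>y\<in>UNIV. trans P s a y * g y) \<le> (\<Sum>y\<in>UNIV. trans P s a y * V y)"
      by (intro sum_mono mult_left_mono gV trans_nonneg)
    show ?thesis
    proof (cases "s \<in> UM")
      case False
      then show ?thesis using base Val_legal_le[OF that(2)] by (simp add: g_def)
    next
      case sUM: True
      show ?thesis
      proof (cases "(s,a) \<in> Opt P T")
        case opt: True
        have "(\<Sum>y\<in>UNIV. trans P s a y * g y) = (\<Sum>y\<in>UNIV. trans P s a y * (M - \<epsilon>))"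
        proof (rule sum.cong[OF refl])
          fix y
          show "trans P s a y * g y = trans P s a y * (M - \<epsilon>)"
          proof (cases "0 < trans P s a y")
            case True then show ?thesis using stay[OF sUM opt] by (simp add: g_def)
          next
            case False then have "trans P s a y = 0" using trans_nonneg[of P s a y] by simp
            then show ?thesis by simp
          qed
        qed
        also have "\<dots> = M - \<epsilon>" using sum_trans[OF that(2)] by (simp add: sum_distrib_right[symmetric])
        finally show ?thesis using sUM by (simp add: g_def)
      next
        case False
        then have "(s,a) \<in> E" using sUM that by (simp add: E_def)
        then have "\<epsilon> \<le> M - (\<Sum>y\<in>UNIV. trans P s a y * V y)" using \<epsilon>gap by (force simp: gap_def)
        then show ?thesis using base sUM by (simp add: g_def)
      qed
    qed
  qed
  have g0: "0 \<le> g s" for s using \<epsilon>M Mpos Val_nonneg[of s] by (simp add: g_def)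
  have gT: "1 \<le> g s" if "s \<in> T" for s using UMnT[of s] that by (auto simp: g_def Val_T)
  have "V sM \<le> g sM"
    by (rule Val_le, rule reach_le_g) (use g0 gT sh in auto)
  moreover have "sM \<in> UM" using sM by (simp add: UM_def)
  ultimately show False using sM \<epsilon>pos by (simp add: g_def)
qed

definition rk :: "'s \<Rightarrow> nat" where "rk s = (LEAST j. s \<in> attr j)"

lemma rk_in: "0 < V s \<Longrightarrow> s \<in> attr (rk s)"
  unfolding rk_def by (rule LeastI_ex) (rule all_in_attr)

lemma rk_le: "s \<in> attr j \<Longrightarrow> rk s \<le> j"
  unfolding rk_def by (rule Least_le)

lemma rk_pos: "0 < V s \<Longrightarrow> s \<notin> T \<Longrightarrow> 0 < rk s"
  using rk_in[of s] by (cases "rk s") auto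

lemma rk_step:
  assumes "0 < V s" "s \<notin> T"
  shows "\<exists>p. (s, fst p) \<in> Opt P T \<and> snd p \<in> attr (rk s - 1) \<and> 0 < trans P s (fst p) (snd p)"
proof -
  have i: "s \<in> attr (rk s)" by (rule rk_in[OF assms(1)])
  obtain j where j: "rk s = Suc j" using rk_pos[OF assms] by (cases "rk s") auto
  have "s \<notin> attr j" using j rk_le[of s j] by auto
  then have "s \<in> {s. 0 < V s \<and> (\<exists>a x. (s,a) \<in> Opt P T \<and> x \<in> attr j \<and> 0 < trans P s a x)}"
    using i j by simp
  then obtain a x where "(s,a) \<in> Opt P T" "x \<in> attr j" "0 < trans P s a x" by blast
  then show ?thesis using j by (intro exI[of _ "(a,x)"]) simp
qed

lemma opt_ex: "\<exists>a. (s,a) \<in> Opt P T"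
proof -
  obtain a where "a \<in> set_pmf (\<sigma>0 [s])" using set_pmf_not_empty[of "\<sigma>0 [s]"] by blast
  then have "(last [s],a) \<in> Opt P T" using strat0 unfolding is_pruned_strategy_def by blast
  then have "(s,a) \<in> Opt P T" by simp
  then show ?thesis ..
qed

definition pick :: "'s \<Rightarrow> 'a \<times> 's" where
  "pick s = (SOME p. (s, fst p) \<in> Opt P T \<and> snd p \<in> attr (rk s - 1) \<and> 0 < trans P s (fst p) (snd p))"

definition act :: "'s \<Rightarrow> 'a" where
  "act s = (if 0 < V s \<and> s \<notin> T then fst (pick s) else (SOME a. (s,a) \<in> Opt P T))"

definition nxt :: "'s \<Rightarrow> 's" where "nxt s = snd (pick s)"

lemma pick_spec:
  assumes "0 < V s" "s \<notin> T"
  shows "(s, act s) \<in> Opt P T" "nxt s \<in> attr (rk s - 1)" "0 < trans P s (act s) (nxt s)"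
  using someI_ex[OF rk_step[OF assms]] assms unfolding act_def nxt_def pick_def by auto

lemma act_opt: "(s, act s) \<in> Opt P T"
  using pick_spec(1)[of s] someI_ex[OF opt_ex[of s]] unfolding act_def by auto

lemma nxt_pos: "0 < V s \<Longrightarrow> s \<notin> T \<Longrightarrow> 0 < V (nxt s)"
  using pick_spec(2) attr_pos by blast

lemma nxt_rk: "0 < V s \<Longrightarrow> s \<notin> T \<Longrightarrow> rk (nxt s) < rk s"
  using pick_spec(2)[of s] rk_le[of "nxt s" "rk s - 1"] rk_pos[of s] by auto

definition sig1 :: "'s list \<Rightarrow> 'a pmf" where "sig1 \<rho> = return_pmf (act (last \<rho>))"

lemma sig1_pruned: "is_pruned_strategy P T sig1"
proof -
  have "legal P s (act s)" for s using act_opt[of s] by (simp add: Opt_def)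
  then show ?thesis using act_opt unfolding is_pruned_strategy_def is_strategy_def sig1_def by simp
qed

definition Pa :: "'s \<Rightarrow> 's \<Rightarrow> real" where "Pa s x = pruned_trans P T s (act s) x"

lemma w_sig1: "w (pruned_trans P T) sig1 \<rho> x = Pa (last \<rho>) x"
  by (simp add: w_def sig1_def Pa_def pmf_return indicator_def)

lemma len1_Suc:
  "len_prob (pruned_trans P T) sig1 T s (Suc r) = (if s \<in> T then 0 else \<Sum>x\<in>UNIV. Pa s x * len_prob (pruned_trans P T) sig1 T x r)"
proof -
  have "len_prob (pruned_trans P T) (shift sig1 s) T x r = len_prob (pruned_trans P T) sig1 T x r" for x
    by (rule len_prob_cong) (simp add: shift_def sig1_def)
  then show ?thesis by (simp add: len_prob_Suc w_sig1)
qed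

lemma Pa_nonneg: "0 \<le> Pa s x" by (simp add: Pa_def pt_nonneg)

lemma Pa_zero: "\<not> 0 < V s \<Longrightarrow> Pa s x = 0" by (simp add: Pa_def pruned_trans_def)

lemma Pa_sum: assumes "0 < V s" shows "(\<Sum>x\<in>UNIV. Pa s x) = 1"
proof -
  have "(\<Sum>x\<in>UNIV. Pa s x) = (\<Sum>x\<in>UNIV. trans P s (act s) x * V x) / V s"
    using assms act_opt[of s] by (simp add: Pa_def pruned_trans_def sum_divide_distrib)
  also have "\<dots> = 1" using act_opt[of s] assms by (simp add: Opt_def)
  finally show ?thesis .
qed

lemma Pa_le: "(\<Sum>x\<in>UNIV. Pa s x) \<le> 1"
  by (cases "0 < V s") (simp_all add: Pa_sum Pa_zero)

lemma Pa_pos_V: assumes "0 < Pa s x" shows "0 < V x"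
proof -
  have "V x \<noteq> 0" using assms by (auto simp: Pa_def pruned_trans_def split: if_splits)
  then show ?thesis using Val_nonneg[of x] by simp
qed

definition H :: "nat \<Rightarrow> 's \<Rightarrow> real" where "H n s = (\<Sum>r<n. len_prob (pruned_trans P T) sig1 T s r)"

lemma H_Suc: "H (Suc n) s = (if s \<in> T then 1 else \<Sum>x\<in>UNIV. Pa s x * H n x)"
proof -
  have sw: "(\<Sum>r<n. \<Sum>x\<in>UNIV. Pa s x * len_prob (pruned_trans P T) sig1 T x r) = (\<Sum>x\<in>UNIV. Pa s x * H n x)"
    unfolding H_def by (simp add: sum_distrib_left) (rule sum.swap)
  have "H (Suc n) s = len_prob (pruned_trans P T) sig1 T s 0 + (\<Sum>r<n. len_prob (pruned_trans P T) sig1 T s (Suc r))"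
    unfolding H_def by (rule sum.lessThan_Suc_shift)
  also have "\<dots> = (if s \<in> T then 1 else \<Sum>x\<in>UNIV. Pa s x * H n x)"
    by (simp add: len_prob_0 len1_Suc sw)
  finally show ?thesis .
qed

lemma H_nonneg: "0 \<le> H n s"
  unfolding H_def by (intro sum_nonneg len_prob_nonneg pt_nonneg)

fun N :: "nat \<Rightarrow> 's \<Rightarrow> real" where
  "N 0 s = 1"
| "N (Suc n) s = (if s \<in> T then 0 else \<Sum>x\<in>UNIV. Pa s x * N n x)"

lemma N_nonneg: "0 \<le> N n s"
  by (induction n arbitrary: s) (auto intro!: sum_nonneg mult_nonneg_nonneg Pa_nonneg)

lemma N_le1: "N n s \<le> 1"
proof (induction n arbitrary: s)
  case 0 then show ?case by simp
next
  case (Suc n)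
  have "(\<Sum>x\<in>UNIV. Pa s x * N n x) \<le> (\<Sum>x\<in>UNIV. Pa s x * 1)"
    by (intro sum_mono mult_left_mono Suc.IH Pa_nonneg)
  also have "\<dots> \<le> 1" using Pa_le by simp
  finally show ?case by simp
qed

lemma HN: "0 < V s \<Longrightarrow> H n s + N n s = 1"
proof (induction n arbitrary: s)
  case 0 then show ?case by (simp add: H_def)
next
  case (Suc n)
  show ?case
  proof (cases "s \<in> T")
    case True then show ?thesis by (simp add: H_Suc)
  next
    case False
    have "H (Suc n) s + N (Suc n) s = (\<Sum>x\<in>UNIV. Pa s x * (H n x + N n x))"
      using False by (simp add: H_Suc distrib_left sum.distrib)
    also have "\<dots> = (\<Sum>x\<in>UNIV. Pa s x)"
    proof (rule sum.cong[OF refl])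
      fix x show "Pa s x * (H n x + N n x) = Pa s x"
      proof (cases "0 < Pa s x")
        case True then show ?thesis using Suc.IH[OF Pa_pos_V[OF True]] by simp
      next
        case False then have "Pa s x = 0" using Pa_nonneg[of s x] by simp
        then show ?thesis by simp
      qed
    qed
    also have "\<dots> = 1" by (rule Pa_sum[OF Suc.prems])
    finally show ?thesis .
  qed
qed

definition p where "p = Min (insert 1 ((\<lambda>s. Pa s (nxt s)) ` {s. 0 < V s \<and> s \<notin> T}))"

lemma p_pos: "0 < p"
proof -
  have "0 < Pa s (nxt s)" if "0 < V s" "s \<notin> T" for s
    using pick_spec[OF that] nxt_pos[OF that] that
    by (simp add: Pa_def pruned_trans_def)
  then show ?thesis unfolding p_def by (subst Min_gr_iff) auto
qed

lemma p_le1: "p \<le> 1" unfolding p_def by (intro Min_le) auto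

lemma p_le: "0 < V s \<Longrightarrow> s \<notin> T \<Longrightarrow> p \<le> Pa s (nxt s)"
  unfolding p_def by (intro Min_le) auto

lemma LB: "0 < V s \<Longrightarrow> rk s \<le> j \<Longrightarrow> j < n \<Longrightarrow> p ^ j \<le> H n s"
proof (induction j arbitrary: s n)
  case 0
  then have "s \<in> T" using rk_in[of s] by simp
  moreover obtain m where "n = Suc m" using 0 by (cases n) auto
  ultimately show ?case by (simp add: H_Suc)
next
  case (Suc j)
  obtain m where m: "n = Suc m" using Suc.prems by (cases n) auto
  show ?case
  proof (cases "s \<in> T")
    case True
    then show ?thesis using m p_pos p_le1 by (simp add: H_Suc mult_le_one power_le_one)
  next
    case False
    have nv: "0 < V (nxt s)" and nr: "rk (nxt s) \<le> j"
      using nxt_pos[OF Suc.prems(1) False] nxt_rk[OF Suc.prems(1) False] Suc.prems(2) by auto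
    have ih: "p ^ j \<le> H m (nxt s)" by (rule Suc.IH[OF nv nr]) (use m Suc.prems in simp)
    have "p ^ Suc j = p * p ^ j" by simp
    also have "\<dots> \<le> Pa s (nxt s) * H m (nxt s)"
      by (rule mult_mono[OF p_le[OF Suc.prems(1) False] ih Pa_nonneg]) (simp add: p_pos less_imp_le)
    also have "\<dots> \<le> (\<Sum>x\<in>UNIV. Pa s x * H m x)"
      by (rule member_le_sum) (auto intro: mult_nonneg_nonneg Pa_nonneg H_nonneg)
    also have "\<dots> = H n s" using False m by (simp add: H_Suc)
    finally show ?thesis .
  qed
qed

definition Kmax where "Kmax = Max (range rk)"
definition K where "K = Suc Kmax"
definition rho where "rho = max (1 - p ^ Kmax) (1/2)"

lemma rho_props: "1/2 \<le> rho" "rho < 1"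
  using p_pos by (auto simp: rho_def)

lemma NK: "N K s \<le> rho"
proof (cases "s \<in> T")
  case True then show ?thesis using rho_props by (simp add: K_def)
next
  case nT: False
  show ?thesis
  proof (cases "0 < V s")
    case True
    have "rk s \<le> Kmax" unfolding Kmax_def by (intro Max_ge) auto
    then have "p ^ Kmax \<le> H K s" using LB[OF True] by (simp add: K_def)
    then show ?thesis using HN[OF True, of K] by (simp add: rho_def)
  next
    case False
    then show ?thesis using nT rho_props by (simp add: K_def Pa_zero)
  qed
qed

lemma geo: "N (n + K) s \<le> rho * N n s"
proof (induction n arbitrary: s)
  case 0 then show ?case using NK by simp
next
  case (Suc n)
  have "(\<Sum>x\<in>UNIV. Pa s x * N (n + K) x) \<le> (\<Sum>x\<in>UNIV. Pa s x * (rho * N n x))"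
    by (intro sum_mono mult_left_mono Suc.IH Pa_nonneg)
  also have "\<dots> = rho * (\<Sum>x\<in>UNIV. Pa s x * N n x)"
    by (simp add: sum_distrib_left mult.left_commute)
  finally show ?case using rho_props by simp
qed

lemma geo2: "N (j * K + i) s \<le> rho ^ j"
proof (induction j arbitrary: s)
  case 0 then show ?case using N_le1 by simp
next
  case (Suc j)
  have "N (Suc j * K + i) s = N ((j * K + i) + K) s" by (simp add: algebra_simps)
  also have "\<dots> \<le> rho * N (j * K + i) s" by (rule geo)
  also have "\<dots> \<le> rho * rho ^ j" using rho_props by (intro mult_left_mono Suc.IH) auto
  finally show ?case by simp
qed

lemma geo3: "N n s \<le> rho ^ (n div K)"
  using geo2[of "n div K" "n mod K" s] by (simp only: div_mult_mod_eq)

lemma rho_theta: "rho ^ (m div K) \<le> root K rho ^ m / rho"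
proof -
  define \<theta> where "\<theta> = root K rho"
  have K0: "0 < K" by (simp add: K_def)
  have rp: "0 < rho" using rho_props by simp
  have "\<theta> < 1" using rho_props K0 unfolding \<theta>_def by simp
  moreover have "0 < \<theta>" using rho_props K0 unfolding \<theta>_def by (intro real_root_gt_zero) auto
  ultimately have th0: "0 \<le> \<theta>" "\<theta> \<le> 1" by auto
  have thK: "\<theta> ^ K = rho" using K0 rp unfolding \<theta>_def by simp
  have "rho ^ (m div K) * rho = \<theta> ^ (K * (m div K) + K)"
    by (simp add: power_add power_mult thK)
  also have "\<dots> \<le> \<theta> ^ m"
  proof (rule power_decreasing[OF _ th0])
    have "m = K * (m div K) + m mod K" by simp
    moreover have "m mod K < K" using K0 by simp
    ultimately show "m \<le> K * (m div K) + K" by linarith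
  qed
  finally show ?thesis using rp unfolding \<theta>_def by (simp add: pos_le_divide_eq)
qed

lemma sig1_good:
  assumes "0 < V s"
  shows "reach_prob (pruned_trans P T) sig1 T s = 1"
    and "summable (\<lambda>r. real r * len_prob (pruned_trans P T) sig1 T s r)"
proof -
  define l where "l r = len_prob (pruned_trans P T) sig1 T s r" for r
  have l0: "0 \<le> l r" for r unfolding l_def by (intro len_prob_nonneg pt_nonneg)
  have Hl: "H (Suc r) s = H r s + l r" for r by (simp add: H_def l_def)
  have lN: "l r = N r s - N (Suc r) s" for r
    using Hl[of r] HN[OF assms, of r] HN[OF assms, of "Suc r"] by simp
  have Hle: "H n s \<le> 1" for n using HN[OF assms, of n] N_nonneg[of n s] by simp
  have sm: "summable l"
  proof (rule bounded_imp_summable)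
    show "0 \<le> l n" for n by (rule l0)
    show "sum l {..n} \<le> 1" for n using Hle[of "Suc n"] by (simp add: H_def l_def lessThan_Suc_atMost)
  qed
  have reach: "reach_prob (pruned_trans P T) sig1 T s = suminf l" by (simp add: reach_prob_def l_def[abs_def])
  have up: "suminf l \<le> 1"
    by (rule suminf_le_const[OF sm]) (use Hle in \<open>simp add: H_def l_def\<close>)
  have lo: "1 - rho ^ j \<le> suminf l" for j
  proof -
    have "1 - rho ^ j \<le> 1 - N (j * K) s" using geo2[of j 0 s] by simp
    also have "\<dots> = H (j * K) s" using HN[OF assms, of "j * K"] by simp
    also have "\<dots> \<le> suminf l" unfolding H_def l_def[symmetric]
      by (rule sum_le_suminf[OF sm]) (auto intro: l0)
    finally show ?thesis .
  qed
  show "reach_prob (pruned_trans P T) sig1 T s = 1"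
  proof (rule ccontr)
    assume "reach_prob (pruned_trans P T) sig1 T s \<noteq> 1"
    then have "0 < 1 - suminf l" using up reach by simp
    then obtain j where "rho ^ j < 1 - suminf l" using real_arch_pow_inv rho_props by blast
    then show False using lo[of j] by simp
  qed
  define f where "f r = real r * l r" for r
  have ident: "(\<Sum>r<n. f r) + real n * N n s = (\<Sum>r<n. N (Suc r) s)" for n
  proof (induction n)
    case 0 then show ?case by simp
  next
    case (Suc n)
    have a: "f n = real n * N n s - real n * N (Suc n) s" by (simp add: f_def lN right_diff_distrib)
    have b: "real (Suc n) * N (Suc n) s = real n * N (Suc n) s + N (Suc n) s" by (simp add: algebra_simps)
    show ?case using Suc.IH a b by simp
  qed
  define \<theta> where "\<theta> = root K rho"
  have K0: "0 < K" by (simp add: K_def)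
  have rp: "0 < rho" using rho_props by simp
  have th: "0 \<le> \<theta>" "\<theta> < 1" using rho_props K0 unfolding \<theta>_def
    by (auto intro: less_imp_le real_root_gt_zero)
  have gs: "summable (\<lambda>r. \<theta> ^ r / rho)" using th by (intro summable_divide summable_geometric) simp
  define B where "B = (\<Sum>r. \<theta> ^ r / rho)"
  have fB: "(\<Sum>r<n. f r) \<le> B" for n
  proof -
    have "(\<Sum>r<n. f r) \<le> (\<Sum>r<n. N (Suc r) s)"
    proof -
      have "0 \<le> real n * N n s" by (simp add: N_nonneg)
      then show ?thesis using ident[of n] by linarith
    qed
    also have "\<dots> \<le> (\<Sum>r<n. \<theta> ^ r / rho)"
    proof (rule sum_mono)
      fix r
      have "N (Suc r) s \<le> rho ^ (Suc r div K)" by (rule geo3)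
      also have "\<dots> \<le> \<theta> ^ Suc r / rho" unfolding \<theta>_def by (rule rho_theta)
      also have "\<dots> \<le> \<theta> ^ r / rho"
        using th rp by (intro divide_right_mono power_decreasing) auto
      finally show "N (Suc r) s \<le> \<theta> ^ r / rho" .
    qed
    also have "\<dots> \<le> B" unfolding B_def
      by (rule sum_le_suminf[OF gs]) (use th rp in auto)
    finally show ?thesis .
  qed
  have "summable f"
  proof (rule bounded_imp_summable)
    show "0 \<le> f n" for n unfolding f_def using l0 by simp
    show "sum f {..n} \<le> B" for n using fB[of "Suc n"] by (simp add: lessThan_Suc_atMost)
  qed
  then show "summable (\<lambda>r. real r * len_prob (pruned_trans P T) sig1 T s r)"
    by (simp add: f_def[abs_def] l_def[abs_def])
qed


lemma reach_pruned:
  assumes "is_pruned_strategy P T \<sigma>"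
  shows "reach_prob (pruned_trans P T) \<sigma> T s = R \<sigma> s / V s"
  unfolding reach_prob_def telescope[OF assms]
  by (rule suminf_divide[OF len_summable[OF pruned_strat[OF assms]]])

lemma exp_pruned:
  assumes "is_pruned_strategy P T \<sigma>" "0 < V s" "R \<sigma> s = V s"
  shows "exp_len (pruned_trans P T) \<sigma> T s = cond_exp_len (trans P) \<sigma> T s"
proof -
  have r1: "reach_prob (pruned_trans P T) \<sigma> T s = 1" using reach_pruned[OF assms(1)] assms(2,3) by simp
  have "(\<lambda>r. ennreal (real r * len_prob (pruned_trans P T) \<sigma> T s r)) = (\<lambda>r. ennreal (real r * len_prob (trans P) \<sigma> T s r) / ennreal (V s))"
  proof
    fix r
    have "0 \<le> real r * len_prob (trans P) \<sigma> T s r" by (intro mult_nonneg_nonneg len_prob_nonneg trans_nonneg) simp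
    then show "ennreal (real r * len_prob (pruned_trans P T) \<sigma> T s r) = ennreal (real r * len_prob (trans P) \<sigma> T s r) / ennreal (V s)"
      using assms(2) by (simp add: telescope[OF assms(1)] divide_ennreal)
  qed
  then have "(\<Sum>r. ennreal (real r * len_prob (pruned_trans P T) \<sigma> T s r)) = (\<Sum>r. ennreal (real r * len_prob (trans P) \<sigma> T s r)) / ennreal (V s)"
    by (simp add: ennreal_suminf_divide)
  then show ?thesis unfolding exp_len_def cond_exp_len_def using r1 assms(3) by simp
qed

lemma main:
  assumes pos: "0 < V s0" and ps: "is_pruned_strategy P T \<sigma>s"
    and minl: "\<forall>\<sigma>. is_pruned_strategy P T \<sigma> \<longrightarrow> exp_len (pruned_trans P T) \<sigma>s T s0 \<le> exp_len (pruned_trans P T) \<sigma> T s0"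
  shows "R \<sigma>s s0 = V s0 \<and> cond_exp_len (trans P) \<sigma>s T s0 = (INF \<sigma> \<in> opt_strategies P T s0. cond_exp_len (trans P) \<sigma> T s0)"
proof -
  have r1: "reach_prob (pruned_trans P T) sig1 T s0 = 1" and sum1: "summable (\<lambda>r. real r * len_prob (pruned_trans P T) sig1 T s0 r)"
    using sig1_good[OF pos] by auto
  have "exp_len (pruned_trans P T) sig1 T s0 = ennreal (\<Sum>r. real r * len_prob (pruned_trans P T) sig1 T s0 r)"
    unfolding exp_len_def using r1 by (simp add: suminf_ennreal2[OF _ sum1] len_prob_nonneg pt_nonneg)
  then have fin: "exp_len (pruned_trans P T) sig1 T s0 < \<top>" by simp
  have "exp_len (pruned_trans P T) \<sigma>s T s0 < \<top>" using minl sig1_pruned fin by (meson le_less_trans)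
  then have "\<not> reach_prob (pruned_trans P T) \<sigma>s T s0 < 1" unfolding exp_len_def by (auto split: if_splits)
  then have "V s0 \<le> R \<sigma>s s0" using reach_pruned[OF ps, of s0] pos by (simp add: le_divide_eq)
  moreover have "R \<sigma>s s0 \<le> V s0" by (rule reach_le_Val[OF pruned_strat[OF ps]])
  ultimately have opt: "R \<sigma>s s0 = V s0" by simp
  have cs: "cond_exp_len (trans P) \<sigma>s T s0 = exp_len (pruned_trans P T) \<sigma>s T s0"
    using exp_pruned[OF ps pos opt] by simp
  have le: "cond_exp_len (trans P) \<sigma>s T s0 \<le> cond_exp_len (trans P) \<sigma> T s0" if "\<sigma> \<in> opt_strategies P T s0" for \<sigma>
  proof -
    have st: "is_strategy P \<sigma>" "R \<sigma> s0 = V s0" using that by (auto simp: opt_strategies_def)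
    have lm: "len_prob (trans P) (modify \<sigma>) T s0 = len_prob (trans P) \<sigma> T s0" by (rule ext, rule modify_len[OF st])
    have Rm: "R (modify \<sigma>) s0 = V s0" using st(2) lm unfolding reach_prob_def by simp
    have "cond_exp_len (trans P) \<sigma>s T s0 \<le> exp_len (pruned_trans P T) (modify \<sigma>) T s0"
      using cs minl modify_pruned[OF st(1)] by simp
    also have "\<dots> = cond_exp_len (trans P) (modify \<sigma>) T s0" by (rule exp_pruned[OF modify_pruned[OF st(1)] pos Rm])
    also have "\<dots> = cond_exp_len (trans P) \<sigma> T s0" unfolding cond_exp_len_def reach_prob_def using lm by simp
    finally show ?thesis .
  qed
  have mem: "\<sigma>s \<in> opt_strategies P T s0" using opt pruned_strat[OF ps] by (simp add: opt_strategies_def)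
  have "(INF \<sigma> \<in> opt_strategies P T s0. cond_exp_len (trans P) \<sigma> T s0) = cond_exp_len (trans P) \<sigma>s T s0"
    by (rule antisym) (auto intro: INF_lower[OF mem] INF_greatest le)
  then show ?thesis using opt by simp
qed

end

theorem theorem1:
  fixes P :: "('s::finite, 'a::finite) mdp" and T :: "'s set" and s0 :: 's
    and \<sigma>s :: "'s list \<Rightarrow> 'a pmf"
  assumes "sinks P T"
    and "Val P T s0 > 0"
    and "is_pruned_strategy P T \<sigma>s"
    and "\<forall>\<sigma>. is_pruned_strategy P T \<sigma> \<longrightarrow>
           exp_len (pruned_trans P T) \<sigma>s T s0 \<le> exp_len (pruned_trans P T) \<sigma> T s0"
  shows "reach_prob (trans P) \<sigma>s T s0 = Val P T s0
    \<and> cond_exp_len (trans P) \<sigma>s T s0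
        = (INF \<sigma> \<in> opt_strategies P T s0. cond_exp_len (trans P) \<sigma> T s0)"
proof -
  interpret mdpc P T \<sigma>s using assms(1,3) by unfold_locales
  show ?thesis using main[OF assms(2,3,4)] by simp
qed

end
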